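(* In the setting below, the vector $1\otimes e^{\lambda_1}\in V^{\Lambda_1}$ is a highest weight vector of type $Vir(\tfrac45,\tfrac1{15})\otimes W^{\Omega_4}$, i.e. it satisfies (HW1)–(HW5) with $h=1/15$ and $\omega_j=\omega_4$.
   Context: Setting. $Q$ is the $E_6$ root lattice with simple roots $\alpha_1,\dots,\alpha_6$ (Dynkin chain $\alpha_1-\alpha_3-\alpha_4-\alpha_5-\alpha_6$, $\alpha_2$ attached to $\alpha_4$), form from the Cartan matrix, fundamental weights $\lambda_i$, $P=\bigoplus\mathbb Z\lambda_i$, $\mathfrak h=\mathbb C\otimes P$. $\varepsilon$ bimultiplicative on $P$ with $[\varepsilon(\lambda_i,\lambda_j)]$ rows $(1,1,1,1,1,1)$, $(-1,1,1,1,1,-1)$, $(-1,1,1,1,1,1)$, $(1,-1,1,1,1,1)$, $(1,1,1,1,1,-1)$, $(1,1,1,1,1,1)$. $V_P=S(\hat{\mathfrak h}^-)\otimes\mathbb C[P]$ with Heisenberg operators $h(n)$ ($[h(m),h'(n)]=m\langle h,h'\rangle\delta_{m+n,0}$, $h(n)1=0$ for $n>0$, $h(0)(u\otimes e^\beta)=\langle h,\beta\rangle u\otimes e^\beta$). For $\alpha\in Q$, acting on $V_P$: $Y(1\otimes e^\alpha,z)=\exp(\sum_{k\ge1}\frac{\alpha(-k)}kz^k)\exp(-\sum_{k\ge1}\frac{\alpha(k)}kz^{-k})e_\alpha z^{\alpha(0)}=\sum_n\{1\otimes e^\alpha\}_nz^{-n-1}$, $e_\alpha(u\otimes e^\beta)=\varepsilon(\alpha,\beta)u\otimes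 e^{\alpha+\beta}$, $z^{\alpha(0)}(u\otimes e^\beta)=z^{\langle\alpha,\beta\rangle}u\otimes e^\beta$; $Y(h_1(-1)\cdots h_k(-1)\otimes e^\alpha,z)=\,:h_1(z)\cdots h_k(z)Y(1\otimes e^\alpha,z):$, $h(z)=\sum_nh(n)z^{-n-1}$. $V^{\Lambda_1}$ is the subspace spanned by $S(\hat{\mathfrak h}^-)\otimes e^\nu$, $\nu\in\lambda_1+Q$. $\tau$: $\alpha_1\leftrightarrow\alpha_6$, $\alpha_3\leftrightarrow\alpha_5$ (so $\lambda_1\leftrightarrow\lambda_6$, $\lambda_3\leftrightarrow\lambda_5$); $\mathrm{Proj}(\nu)=(\nu+\tau\nu)/2$. $\theta=\alpha_1+2\alpha_2+2\alpha_3+3\alpha_4+2\alpha_5+\alpha_6$. Raising operators of $\tilde{\mathfrak a}$ ($F_4^{(1)}$): $\{\beta_1\}_0=\{1\otimes e^{\alpha_2}\}_0$, $\{\beta_2\}_0=\{1\otimes e^{\alpha_4}\}_0$, $\{\beta_3\}_0=\{1\otimes e^{\alpha_3}\}_0+\{1\otimes e^{\alpha_5}\}_0$, $\{\beta_4\}_0=\{1\otimes e^{\alpha_1}\}_0+\{1\otimes e^{\alpha_6}\}_0$, $\{1\otimes e^{-\theta}\}_1$. Coset conformal vector $\omega=\frac1{10}[(-\lambda_1+\lambda_6)(-1)^2+(\lambda_3-\lambda_5)(-1)^2+(\lambda_1-\lambda_3+\lambda_5-\lambda_6)(-1)^2]\otimes e^0+\frac15(-1\otimes e^{\pm\gamma_1}-1\otimes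 e^{\pm\gamma_2}+1\otimes e^{\pm\gamma_3})$, $\gamma_1=\alpha_1-\alpha_6$, $\gamma_2=\alpha_3-\alpha_5$, $\gamma_3=\gamma_1+\gamma_2$, $1\otimes e^{\pm\gamma}:=1\otimes e^\gamma+1\otimes e^{-\gamma}$; $L(n)=\{\omega\}_{n+1}$ on $V_P$ (Virasoro, $c=4/5$, commuting with $\tilde{\mathfrak a}$). $\omega_4=\frac{\lambda_1+\lambda_6}2$, $\Omega_4$ the level one $F_4^{(1)}$ weight with finite part $\omega_4$, $W^{\Omega_4}$ its irreducible module. A nonzero $v$ is a highest weight vector of type $Vir(\frac45,h)\otimes W^{\Omega_j}$ if (HW1) $\{1\otimes e^{-\theta}\}_1v=0$; (HW2) $\{\beta_i\}_0v=0$, $i=1,\dots,4$; (HW3) $L(1)v=L(2)v=0$; (HW4) $L(0)v=hv$; (HW5) $v\in\bigoplus_kS(\hat{\mathfrak h}^-)\otimes e^{\nu_k}$ with $\mathrm{Proj}(\nu_k)=\omega_j$. *)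

theory Defs
  imports Complex_Main "HOL-Library.Multiset" "HOL-Library.Groups_Big_Fun" "HOL-Library.Function_Algebras"
begin

datatype idx = I1 | I2 | I3 | I4 | I5 | I6

lemma UNIV_idx: "(UNIV :: idx set) = {I1,I2,I3,I4,I5,I6}"
  using idx.exhaust by auto

instance idx :: finite
  by standard (simp add: UNIV_idx)

text \<open>Conventions.
  lat: element of P, written in the basis of fundamental weights lambda_i (integer coordinates).
  rt:  element of Q, written in the basis of simple roots alpha_i (integer coordinates).
  hv:  element of h = C (x) P, written in the basis alpha_i (complex coordinates).
  A monomial of S(h^-) is a multiset of pairs (i,m), the pair (i,m) standing for alpha_i(-(m+1)).
  A vector of V_P is a coefficient function on the basis (monomial) (x) e^beta.\<close>

type_synonym lat = "idx \<Rightarrow> int"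
type_synonym rt = "idx \<Rightarrow> int"
type_synonym hv = "idx \<Rightarrow> complex"
type_synonym mono = "(idx \<times> nat) multiset"
type_synonym V = "mono \<times> lat \<Rightarrow> complex"

definition adj :: "idx \<Rightarrow> idx \<Rightarrow> bool" where
  "adj i j \<longleftrightarrow> (i,j) \<in> {(I1,I3),(I3,I4),(I4,I5),(I5,I6),(I2,I4)} \<or> (j,i) \<in> {(I1,I3),(I3,I4),(I4,I5),(I5,I6),(I2,I4)}"

text \<open>Cartan matrix of E6: entry (i,j) is the form value on alpha_i, alpha_j.\<close>
definition cartan :: "idx \<Rightarrow> idx \<Rightarrow> int" where
  "cartan i j = (if i = j then 2 else if adj i j then -1 else 0)"

definition unitv :: "idx \<Rightarrow> idx \<Rightarrow> int" where
  "unitv i = (\<lambda>j. if j = i then 1 else 0)"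

abbreviation sroot :: "idx \<Rightarrow> rt" where "sroot i \<equiv> unitv i"
abbreviation fwt :: "idx \<Rightarrow> lat" where "fwt i \<equiv> unitv i"

text \<open>element of Q as element of P (lambda-coordinates): alpha_i = sum_j A_ij lambda_j\<close>
definition rlat :: "rt \<Rightarrow> lat" where
  "rlat q = (\<lambda>j. \<Sum>i\<in>UNIV. q i * cartan i j)"

definition rh :: "rt \<Rightarrow> hv" where
  "rh q = (\<lambda>i. of_int (q i))"

definition pairQP :: "rt \<Rightarrow> lat \<Rightarrow> int" where
  "pairQP q \<beta> = (\<Sum>i\<in>UNIV. q i * \<beta> i)"

text \<open>fundamental weights as elements of h in alpha-coordinates (inverse Cartan matrix of E6)\<close>
definition fwtab :: "idx \<Rightarrow> idx \<Rightarrow> rat" where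
  "fwtab i j = (case i of
      I1 \<Rightarrow> (case j of I1 \<Rightarrow> 4/3 | I2 \<Rightarrow> 1 | I3 \<Rightarrow> 5/3 | I4 \<Rightarrow> 2 | I5 \<Rightarrow> 4/3 | I6 \<Rightarrow> 2/3)
    | I2 \<Rightarrow> (case j of I1 \<Rightarrow> 1 | I2 \<Rightarrow> 2 | I3 \<Rightarrow> 2 | I4 \<Rightarrow> 3 | I5 \<Rightarrow> 2 | I6 \<Rightarrow> 1)
    | I3 \<Rightarrow> (case j of I1 \<Rightarrow> 5/3 | I2 \<Rightarrow> 2 | I3 \<Rightarrow> 10/3 | I4 \<Rightarrow> 4 | I5 \<Rightarrow> 8/3 | I6 \<Rightarrow> 4/3)
    | I4 \<Rightarrow> (case j of I1 \<Rightarrow> 2 | I2 \<Rightarrow> 3 | I3 \<Rightarrow> 4 | I4 \<Rightarrow> 6 | I5 \<Rightarrow> 4 | I6 \<Rightarrow> 2)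
    | I5 \<Rightarrow> (case j of I1 \<Rightarrow> 4/3 | I2 \<Rightarrow> 2 | I3 \<Rightarrow> 8/3 | I4 \<Rightarrow> 4 | I5 \<Rightarrow> 10/3 | I6 \<Rightarrow> 5/3)
    | I6 \<Rightarrow> (case j of I1 \<Rightarrow> 2/3 | I2 \<Rightarrow> 1 | I3 \<Rightarrow> 4/3 | I4 \<Rightarrow> 2 | I5 \<Rightarrow> 5/3 | I6 \<Rightarrow> 4/3))"

definition fwh :: "idx \<Rightarrow> hv" where
  "fwh i = (\<lambda>j. of_rat (fwtab i j))"

lemma fwh_dual: "(\<Sum>k\<in>UNIV. fwh i k * of_int (cartan k j)) = (if i = j then 1 else 0)"
  by (cases i; cases j)
     (simp_all add: UNIV_idx fwh_def fwtab_def cartan_def adj_def of_rat_divide)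

definition epsm :: "idx \<Rightarrow> idx \<Rightarrow> int" where
  "epsm i j = (case i of
      I1 \<Rightarrow> 1
    | I2 \<Rightarrow> (if j = I1 \<or> j = I6 then -1 else 1)
    | I3 \<Rightarrow> (if j = I1 then -1 else 1)
    | I4 \<Rightarrow> (if j = I2 then -1 else 1)
    | I5 \<Rightarrow> (if j = I6 then -1 else 1)
    | I6 \<Rightarrow> 1)"

text \<open>bimultiplicative extension: eps(x,y) = prod_ij eps(lambda_i,lambda_j)^(x_i y_j)\<close>
definition eps :: "lat \<Rightarrow> lat \<Rightarrow> complex" where
  "eps x y = (\<Prod>i\<in>UNIV. \<Prod>j\<in>UNIV. (of_int (epsm i j)) powi (x i * y j))"

definition basis :: "mono \<Rightarrow> lat \<Rightarrow> V" where
  "basis M \<beta> = (\<lambda>b. if b = (M, \<beta>) then 1 else 0)"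

definition smult :: "complex \<Rightarrow> V \<Rightarrow> V" where
  "smult a v = (\<lambda>b. a * v b)"

definition lin :: "(mono \<Rightarrow> lat \<Rightarrow> V) \<Rightarrow> V \<Rightarrow> V" where
  "lin f v = (\<lambda>b. Sum_any (\<lambda>c. v c * f (fst c) (snd c) b))"

definition heis_basis :: "idx \<Rightarrow> int \<Rightarrow> mono \<Rightarrow> lat \<Rightarrow> V" where
  "heis_basis i n M \<beta> =
    (if n < 0 then basis (M + {#(i, nat (- n - 1))#}) \<beta>
     else if n = 0 then smult (of_int (\<beta> i)) (basis M \<beta>)
     else (\<Sum>j\<in>UNIV. smult (of_int (n * cartan i j * int (count M (j, nat (n - 1)))))
                            (basis (M - {#(j, nat (n - 1))#}) \<beta>)))"

definition heis :: "hv \<Rightarrow> int \<Rightarrow> V \<Rightarrow> V" where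
  "heis c n v = (\<Sum>i\<in>UNIV. smult (c i) (lin (heis_basis i n) v))"

definition parts :: "nat \<Rightarrow> (nat \<Rightarrow> nat) set" where
  "parts a = {m. (\<forall>k. m k \<noteq> 0 \<longrightarrow> 1 \<le> k \<and> k \<le> a) \<and> (\<Sum>k\<in>{1..a}. k * m k) = a}"

text \<open>coefficient of t^a in exp(sum_{k>=1} s * X(k) t^k / k) (the X(k) commute)\<close>
definition expco :: "(nat \<Rightarrow> V \<Rightarrow> V) \<Rightarrow> complex \<Rightarrow> nat \<Rightarrow> V \<Rightarrow> V" where
  "expco X s a v = (\<Sum>m\<in>parts a.
      smult (\<Prod>k\<in>{1..a}. s ^ m k / (of_nat k ^ m k * fact (m k)))
            (fold (\<lambda>k w. (X k ^^ m k) w) [1..<Suc a] v))"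

text \<open>{1 (x) e^alpha}_n on a basis vector u (x) e^beta: coefficient of z^(-n-1) in
  exp(sum alpha(-k) z^k/k) exp(-sum alpha(k) z^(-k)/k) eps(alpha,beta) z^<alpha,beta> u (x) e^(alpha+beta)\<close>
definition vop_basis :: "rt \<Rightarrow> int \<Rightarrow> mono \<Rightarrow> lat \<Rightarrow> V" where
  "vop_basis q n M \<beta> = (\<lambda>x. Sum_any (\<lambda>b::nat.
      (let a = - n - 1 - pairQP q \<beta> + int b in
       if a \<ge> 0 then
         expco (\<lambda>k. heis (rh q) (- int k)) 1 (nat a)
           (expco (\<lambda>k. heis (rh q) (int k)) (-1) b
              (smult (eps (rlat q) \<beta>) (basis M (rlat q + \<beta>))))
       else 0) x))"

definition vop :: "rt \<Rightarrow> int \<Rightarrow> V \<Rightarrow> V" where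
  "vop q n = lin (vop_basis q n)"

definition nord :: "hv \<Rightarrow> int \<Rightarrow> hv \<Rightarrow> int \<Rightarrow> V \<Rightarrow> V" where
  "nord c m d p v = (if m > 0 then heis d p (heis c m v) else heis c m (heis d p v))"

text \<open>{c(-1) d(-1) (x) e^0}_n, from Y(c(-1)d(-1) (x) e^0, z) = :c(z) d(z):\<close>
definition quad :: "hv \<Rightarrow> hv \<Rightarrow> int \<Rightarrow> V \<Rightarrow> V" where
  "quad c d n v = (\<lambda>x. Sum_any (\<lambda>m::int. nord c m d (n - 1 - m) v x))"

definition hA :: hv where "hA = - fwh I1 + fwh I6"
definition hB :: hv where "hB = fwh I3 - fwh I5"
definition hC :: hv where "hC = fwh I1 - fwh I3 + fwh I5 - fwh I6"

definition gam1 :: rt where "gam1 = sroot I1 - sroot I6"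
definition gam2 :: rt where "gam2 = sroot I3 - sroot I5"
definition gam3 :: rt where "gam3 = gam1 + gam2"

text \<open>{omega}_n, using linearity of Y in the state\<close>
definition omega_mode :: "int \<Rightarrow> V \<Rightarrow> V" where
  "omega_mode n v =
     smult (1/10) (quad hA hA n v + quad hB hB n v + quad hC hC n v)
   + smult (1/5) (- (vop gam1 n v + vop (- gam1) n v)
                  - (vop gam2 n v + vop (- gam2) n v)
                  + (vop gam3 n v + vop (- gam3) n v))"

definition Lop :: "int \<Rightarrow> V \<Rightarrow> V" where
  "Lop n = omega_mode (n + 1)"

definition theta :: rt where
  "theta = sroot I1 + 2 * sroot I2 + 2 * sroot I3 + 3 * sroot I4 + 2 * sroot I5 + sroot I6"

definition tau :: "idx \<Rightarrow> idx" where
  "tau i = (case i of I1 \<Rightarrow> I6 | I6 \<Rightarrow> I1 | I3 \<Rightarrow> I5 | I5 \<Rightarrow> I3 | _ \<Rightarrow> i)"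

definition Proj :: "lat \<Rightarrow> idx \<Rightarrow> rat" where
  "Proj \<nu> = (\<lambda>i. (of_int (\<nu> i) + of_int (\<nu> (tau i))) / 2)"

definition omega4 :: "idx \<Rightarrow> rat" where
  "omega4 = (\<lambda>i. if i = I1 \<or> i = I6 then 1/2 else 0)"

definition hw_vector :: "complex \<Rightarrow> (idx \<Rightarrow> rat) \<Rightarrow> V \<Rightarrow> bool" where
  "hw_vector h wj v \<longleftrightarrow> v \<noteq> 0
     \<and> vop (- theta) 1 v = 0
     \<and> vop (sroot I2) 0 v = 0
     \<and> vop (sroot I4) 0 v = 0
     \<and> vop (sroot I3) 0 v + vop (sroot I5) 0 v = 0
     \<and> vop (sroot I1) 0 v + vop (sroot I6) 0 v = 0
     \<and> Lop 1 v = 0 \<and> Lop 2 v = 0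
     \<and> Lop 0 v = smult h v
     \<and> (\<forall>M \<nu>. v (M, \<nu>) \<noteq> 0 \<longrightarrow> Proj \<nu> = wj)"

end

theory Submission
  imports Defs
begin

definition SE :: "V set" where
  "SE = {v. \<forall>M \<beta>. v (M, \<beta>) \<noteq> 0 \<longrightarrow> M = {#}}"

lemma lam0[simp]: "(\<lambda>a. 0::complex) = 0" by (simp add: fun_eq_iff)

lemma zero_SE[simp]: "(0::V) \<in> SE" by (simp add: SE_def)

lemma basis_SE[simp]: "smult a (basis {#} \<beta>) \<in> SE"
  by (simp add: SE_def smult_def basis_def)

lemma smult_zero[simp]: "smult a 0 = 0"
  by (simp add: smult_def fun_eq_iff)

lemma lin_smult_basis: "lin f (smult a (basis M \<beta>)) = smult a (f M \<beta>)"
proof -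
  have "\<And>b. Sum_any (\<lambda>c. smult a (basis M \<beta>) c * f (fst c) (snd c) b)
         = Sum_any (\<lambda>c. if c = (M,\<beta>) then a * f (fst c) (snd c) b else 0)"
    by (rule Sum_any.cong) (simp add: smult_def basis_def)
  then show ?thesis by (simp add: lin_def smult_def fun_eq_iff)
qed

lemma lin_basis: "lin f (basis M \<beta>) = f M \<beta>"
proof -
  have "basis M \<beta> = smult 1 (basis M \<beta>)" by (simp add: smult_def)
  then show ?thesis using lin_smult_basis[of f 1 M \<beta>] by (simp add: smult_def)
qed

lemma heis_basis_ann: "n > 0 \<Longrightarrow> heis_basis i n {#} \<beta> = 0"
  unfolding heis_basis_def by (simp add: smult_def)

lemma heis_ann:
  assumes "n > 0" "v \<in> SE"
  shows "heis c n v = 0"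
proof -
  have "lin (heis_basis i n) v = 0" for i
  proof -
    have "\<And>b cc. v cc * heis_basis i n (fst cc) (snd cc) b = 0"
    proof -
      fix b cc
      show "v cc * heis_basis i n (fst cc) (snd cc) b = 0"
      proof (cases "v cc = 0")
        case False
        obtain M bb where cc: "cc = (M, bb)" by fastforce
        then have "M = {#}" using assms(2) False unfolding SE_def by blast
        then show ?thesis using assms(1) cc heis_basis_ann[of n i bb] by simp
      qed simp
    qed
    then have "\<And>b. (\<lambda>cc. v cc * heis_basis i n (fst cc) (snd cc) b) = (\<lambda>cc. 0)"
      by (simp only: fun_eq_iff) blast
    then show ?thesis unfolding lin_def by (simp only: Sum_any.neutral) (simp add: fun_eq_iff)
  qed
  then have "smult (c i) (lin (heis_basis i n) v) = 0" for i by simp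
  then show ?thesis unfolding heis_def by simp
qed

lemma fold_ann:
  assumes "\<And>k. X k 0 = 0" "\<And>k v. k \<ge> 1 \<Longrightarrow> v \<in> SE \<Longrightarrow> X k v = 0" "v \<in> SE"
    "\<forall>k\<in>set ks. k \<ge> (1::nat)"
  shows "fold (\<lambda>k w. (X k ^^ m k) w) ks v = (if \<exists>k\<in>set ks. m k > 0 then 0 else v)"
  using assms(3,4)
proof (induction ks arbitrary: v)
  case Nil then show ?case by simp
next
  case (Cons k ks)
  have z: "(X k ^^ j) 0 = 0" for j
  proof (induction j)
    case (Suc j) then show ?case by (metis assms(1) comp_apply funpow.simps(2))
  qed simp
  show ?case
  proof (cases "m k > 0")
    case True
    then obtain j where "m k = Suc j" using gr0_implies_Suc by blast
    then have "(X k ^^ m k) v = 0"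
      using assms(2)[of k v] Cons.prems z
      by (simp add: funpow_Suc_right del: funpow.simps)
    then show ?thesis using True Cons.IH[of 0] Cons.prems by simp
  next
    case False
    then show ?thesis using Cons.IH[of v] Cons.prems by simp
  qed
qed

lemma expco_ann:
  assumes "\<And>k. X k 0 = 0" "\<And>k v. k \<ge> 1 \<Longrightarrow> v \<in> SE \<Longrightarrow> X k v = 0" "v \<in> SE" "b > 0"
  shows "expco X s b v = 0"
proof -
  have "fold (\<lambda>k w. (X k ^^ m k) w) [1..<Suc b] v = 0" if "m \<in> parts b" for m
  proof -
    have "\<exists>k\<in>{1..b}. m k > 0"
    proof (rule ccontr)
      assume "\<not> ?thesis"
      then have "\<forall>k\<in>{1..b}. k * m k = 0" by simp
      then have "(\<Sum>k\<in>{1..b}. k * m k) = 0" by (meson sum.neutral)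
      moreover have "(\<Sum>k\<in>{1..b}. k * m k) = b" using that by (simp add: parts_def)
      ultimately show False using assms(4) by simp
    qed
    then have ex: "\<exists>k\<in>set [1..<Suc b]. m k > 0" by (metis atLeastLessThanSuc_atLeastAtMost set_upt)
    have "\<forall>k\<in>set [1..<Suc b]. k \<ge> (1::nat)" by auto
    then have "fold (\<lambda>k w. (X k ^^ m k) w) [1..<Suc b] v = (if \<exists>k\<in>set [1..<Suc b]. m k > 0 then 0 else v)"
      using fold_ann[where X=X and m=m and ks="[1..<Suc b]" and v=v] assms(1,2,3) by blast
    then show ?thesis using ex by simp
  qed
  then show ?thesis by (simp add: expco_def)
qed

lemma expco_zero:
  assumes "\<And>k. X k 0 = 0"
  shows "expco X s b 0 = 0"
proof -
  have "fold (\<lambda>k w. (X k ^^ m k) w) ks 0 = 0" for m ks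
  proof (induction ks)
    case Nil then show ?case by simp
  next
    case (Cons k ks)
    have z: "(X k ^^ j) 0 = 0" for j
    proof (induction j)
      case (Suc j) then show ?case by (metis assms(1) comp_apply funpow.simps(2))
    qed simp
    show ?case using Cons z by simp
  qed
  then show ?thesis by (simp add: expco_def)
qed

lemma heis_zero[simp]: "heis c n 0 = 0"
  by (simp add: heis_def lin_def fun_eq_iff)

lemma vop_vanish:
  assumes "- n - 1 - pairQP q \<beta> < 0"
  shows "vop q n (basis {#} \<beta>) = 0"
proof -
  have "vop_basis q n {#} \<beta> = 0"
  proof -
    have "\<And>x b. (let a = - n - 1 - pairQP q \<beta> + int b in
       if a \<ge> 0 then
         expco (\<lambda>k. heis (rh q) (- int k)) 1 (nat a)
           (expco (\<lambda>k. heis (rh q) (int k)) (-1) b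
              (smult (eps (rlat q) \<beta>) (basis {#} (rlat q + \<beta>))))
       else 0) x = 0"
    proof -
      fix x b
      show "?thesis x b"
      proof (cases "b = 0")
        case True then show ?thesis using assms by (simp add: Let_def)
      next
        case False
        have "expco (\<lambda>k. heis (rh q) (int k)) (-1) b
              (smult (eps (rlat q) \<beta>) (basis {#} (rlat q + \<beta>))) = 0"
          by (rule expco_ann) (use False in \<open>auto intro!: heis_ann\<close>)
        then show ?thesis by (simp add: Let_def expco_zero)
      qed
    qed
    then show ?thesis by (simp add: vop_basis_def fun_eq_iff)
  qed
  then show ?thesis by (simp add: vop_def lin_basis)
qed


lemma basis_SE1[simp]: "basis {#} \<beta> \<in> SE"
  using basis_SE[of 1 \<beta>] by (simp add: smult_def)

lemma sum_idx: "(\<Sum>i\<in>UNIV. f i) = f I1 + f I2 + f I3 + f I4 + f I5 + f I6"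
  by (simp add: UNIV_idx add.assoc)

lemma pairQP_fwt: "pairQP q (fwt i) = q i"
  by (cases i) (simp_all add: pairQP_def sum_idx unitv_def)

lemma heis0_basis: "heis c 0 (smult a (basis M \<beta>)) = smult (a * (\<Sum>i\<in>UNIV. c i * of_int (\<beta> i))) (basis M \<beta>)"
proof -
  have "heis c 0 (smult a (basis M \<beta>)) = (\<Sum>i\<in>UNIV. smult (c i) (smult a (smult (of_int (\<beta> i)) (basis M \<beta>))))"
    unfolding heis_def lin_smult_basis by (simp add: heis_basis_def)
  also have "\<dots> = smult (a * (\<Sum>i\<in>UNIV. c i * of_int (\<beta> i))) (basis M \<beta>)"
    by (simp add: sum_idx smult_def fun_eq_iff algebra_simps)
  finally show ?thesis .
qed

lemma nord_basis:
  "nord c m d p (basis {#} \<beta>) = (if m \<le> 0 \<and> p \<le> 0 then heis c m (heis d p (basis {#} \<beta>)) else 0)"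
  by (auto simp: nord_def heis_ann)

lemma quad_vanish:
  assumes "n \<ge> 2"
  shows "quad c d n (basis {#} \<beta>) = 0"
proof -
  have "\<And>x. (\<lambda>m. nord c m d (n - 1 - m) (basis {#} \<beta>) x) = (\<lambda>m. 0)"
    using assms by (auto simp: nord_basis fun_eq_iff)
  then show ?thesis unfolding quad_def by (simp only: Sum_any.neutral) (simp add: fun_eq_iff)
qed

lemma quad_one:
  "quad c d 1 (basis {#} \<beta>) = heis c 0 (heis d 0 (basis {#} \<beta>))"
proof -
  have "\<And>x. (\<lambda>m. nord c m d (1 - 1 - m) (basis {#} \<beta>) x)
     = (\<lambda>m. if m = 0 then heis c 0 (heis d 0 (basis {#} \<beta>)) x else 0)"
    by (auto simp: nord_basis fun_eq_iff)
  then show ?thesis unfolding quad_def by (simp add: fun_eq_iff)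
qed


lemma vv: "- n - 1 - q I1 < 0 \<Longrightarrow> vop q n (basis {#} (fwt I1)) = 0"
  by (rule vop_vanish) (simp add: pairQP_fwt)

lemma theta1: "theta I1 = 1" by (simp add: theta_def unitv_def)
lemma gam_vals: "gam1 I1 = 1" "gam2 I1 = 0" "gam3 I1 = 1"
  by (simp_all add: gam1_def gam2_def gam3_def unitv_def)

lemma hvals: "hA I1 = -2/3" "hB I1 = 1/3" "hC I1 = 1/3"
  by (simp_all add: hA_def hB_def hC_def fwh_def fwtab_def of_rat_divide)

lemma pair_fwt1: "(\<Sum>i\<in>UNIV. c i * of_int (fwt I1 i)) = c I1"
  by (simp add: sum_idx unitv_def)

lemma quad_val: "quad c c 1 (basis {#} (fwt I1)) = smult (c I1 * c I1) (basis {#} (fwt I1))"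
proof -
  have b: "basis {#} (fwt I1) = smult 1 (basis {#} (fwt I1))" by (simp add: smult_def)
  show ?thesis unfolding quad_one
    by (subst b, subst heis0_basis, subst heis0_basis) (simp add: pair_fwt1)
qed

theorem lemma6p14:
  shows "hw_vector (1/15) omega4 (basis {#} (fwt I1))"
proof -
  let ?v = "basis {#} (fwt I1)"
  have nz: "?v \<noteq> 0"
  proof
    assume "?v = 0"
    then have "?v ({#}, fwt I1) = 0" by simp
    then show False by (simp add: basis_def)
  qed
  have vg: "vop g n ?v = 0" if "g \<in> {gam1, -gam1, gam2, -gam2, gam3, -gam3}" "n \<ge> 1" for g n
    using that by (auto intro!: vv simp: gam_vals)
  have L1: "Lop 1 ?v = 0" and L2: "Lop 2 ?v = 0"
    by (simp_all add: Lop_def omega_mode_def quad_vanish vg smult_def fun_eq_iff)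
  have G: "vop gam1 1 ?v = 0" "vop (-gam1) 1 ?v = 0" "vop gam2 1 ?v = 0" "vop (-gam2) 1 ?v = 0"
     "vop gam3 1 ?v = 0" "vop (-gam3) 1 ?v = 0" by (simp_all add: vg)
  have L0: "Lop 0 ?v = smult (1/15) ?v"
    unfolding Lop_def omega_mode_def
    by (simp only: G quad_val hvals add_0_right add_0_left) (simp add: smult_def fun_eq_iff)
  have P: "Proj (fwt I1) = omega4"
    by (rule ext, case_tac x) (simp_all add: Proj_def omega4_def tau_def unitv_def)
  have supp: "\<forall>M \<nu>. ?v (M, \<nu>) \<noteq> 0 \<longrightarrow> Proj \<nu> = omega4"
    using P by (simp add: basis_def)
  have V: "vop (- theta) 1 ?v = 0" "vop (sroot I2) 0 ?v = 0" "vop (sroot I4) 0 ?v = 0"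
    "vop (sroot I3) 0 ?v = 0" "vop (sroot I5) 0 ?v = 0" "vop (sroot I1) 0 ?v = 0" "vop (sroot I6) 0 ?v = 0"
    by (rule vv; simp add: theta1 unitv_def)+
  show ?thesis unfolding hw_vector_def using nz L1 L2 L0 supp V by simp
qed

end
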